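(* Let $G\cong C_{n_1}\oplus\cdots\oplus C_{n_r}$ with $|G|\ge3$ and $1<n_1\mid\cdots\mid n_r$. Then \[[1,n_r-2]\cup\Big[1,-1+\sum_{i=1}^r\Big\lfloor\frac{n_i}{2}\Big\rfloor\Big]\subset\Delta(G).\]
   Context: Intervals are sets of integers: $[a,b]=\{z\in\mathbb{Z}: a\le z\le b\}$. For $A\subset\mathbb{Z}$, $\Delta(A)$ is the set of $d\in\mathbb{N}$ such that there is $l\in A$ with $A\cap[l,l+d]=\{l,l+d\}$. For a finite abelian group $G$, $\mathcal{B}(G)$ is the monoid of zero-sum sequences over $G$ (elements of the free abelian monoid on $G$ whose terms sum to $0$), its atoms are minimal zero-sum sequences, $\mathsf{L}(B)$ is the set of lengths of factorizations of $B$ into atoms, and $\Delta(G)=\bigcup_{B\in\mathcal{B}(G)}\Delta(\mathsf{L}(B))$. *)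

theory Defs
  imports "HOL-Library.Multiset"
begin

text \<open>The group G = C_{n_1} + ... + C_{n_r}, given by the list ns = [n_1,...,n_r].
  Elements are lists g of length r with 0 <= g!i < n_i; addition is componentwise mod n_i.\<close>

definition Gcar :: "nat list \<Rightarrow> nat list set" where
  "Gcar ns = {g. length g = length ns \<and> (\<forall>i<length ns. g ! i < ns ! i)}"

definition zero_sum :: "nat list \<Rightarrow> nat list multiset \<Rightarrow> bool" where
  "zero_sum ns B \<longleftrightarrow> set_mset B \<subseteq> Gcar ns \<and>
     (\<forall>i<length ns. (\<Sum>x\<in>#B. x ! i) mod (ns ! i) = 0)"

definition atom :: "nat list \<Rightarrow> nat list multiset \<Rightarrow> bool" where
  "atom ns A \<longleftrightarrow> zero_sum ns A \<and> A \<noteq> {#} \<and>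
     (\<forall>C. C \<subseteq># A \<and> C \<noteq> {#} \<and> zero_sum ns C \<longrightarrow> C = A)"

definition Lset :: "nat list \<Rightarrow> nat list multiset \<Rightarrow> nat set" where
  "Lset ns B = {size F | F :: nat list multiset multiset.
       (\<forall>A\<in>#F. atom ns A) \<and> sum_mset F = B}"

text \<open>Set of distances of a set of integers (here lengths, so natural numbers).\<close>
definition delta_set :: "nat set \<Rightarrow> nat set" where
  "delta_set L = {d. d > 0 \<and> (\<exists>l\<in>L. l + d \<in> L \<and> (\<forall>k. l < k \<and> k < l + d \<longrightarrow> k \<notin> L))}"

definition DeltaG :: "nat list \<Rightarrow> nat set" where
  "DeltaG ns = (\<Union>B\<in>{B. zero_sum ns B}. delta_set (Lset ns B))"

end

theory Submission
  imports Defs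
begin


datatype lab = Pos nat | Neg nat | Hh | NHh

definition zsl :: "nat list \<Rightarrow> (lab \<Rightarrow> nat list) \<Rightarrow> lab set \<Rightarrow> bool" where
  "zsl ns v Q \<longleftrightarrow> (\<forall>l\<in>Q. v l \<in> Gcar ns) \<and> (\<forall>i<length ns. (\<Sum>l\<in>Q. v l ! i) mod (ns!i) = 0)"

definition ablock :: "nat list \<Rightarrow> (lab \<Rightarrow> nat list) \<Rightarrow> lab set \<Rightarrow> bool" where
  "ablock ns v Q \<longleftrightarrow> finite Q \<and> Q \<noteq> {} \<and> zsl ns v Q \<and>
     (\<forall>Q'. Q' \<subseteq> Q \<and> Q' \<noteq> {} \<and> zsl ns v Q' \<longrightarrow> Q' = Q)"

lemma zsl_iff: "finite Q \<Longrightarrow> zero_sum ns (image_mset v (mset_set Q)) \<longleftrightarrow> zsl ns v Q"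
  unfolding zero_sum_def zsl_def by (simp add: sum_unfold_sum_mset multiset.map_comp o_def image_subset_iff)

lemma msub_set: assumes "Q \<subseteq># mset_set S" shows "mset_set (set_mset Q) = Q"
proof (rule multiset_eqI)
  fix x
  have c1: "count Q x \<le> count (mset_set S) x" using mset_subset_eq_count[OF assms] .
  have c2: "count (mset_set S) x \<le> 1" by (simp add: count_mset_set')
  show "count (mset_set (set_mset Q)) x = count Q x"
  proof (cases "x \<in># Q")
    case True
    then have "count Q x \<noteq> 0" by simp
    then have "count Q x = 1" using c1 c2 by linarith
    then show ?thesis using True by simp
  next
    case False
    then have "count Q x = 0" using not_in_iff[of x Q] by blast
    then show ?thesis using False by simp
  qed
qed

lemma atom_ablock:
  assumes fin: "finite Q"
  shows "atom ns (image_mset v (mset_set Q)) \<longleftrightarrow> ablock ns v Q"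
proof
  assume a: "atom ns (image_mset v (mset_set Q))"
  have a1: "zero_sum ns (image_mset v (mset_set Q))" and a2: "image_mset v (mset_set Q) \<noteq> {#}"
    and a3: "\<And>C. C \<subseteq># image_mset v (mset_set Q) \<Longrightarrow> C \<noteq> {#} \<Longrightarrow> zero_sum ns C \<Longrightarrow> C = image_mset v (mset_set Q)"
    using a unfolding atom_def by auto
  have z: "zsl ns v Q" using a1 zsl_iff[OF fin] by simp
  have ne: "Q \<noteq> {}" using a2 by auto
  have "Q' = Q" if "Q' \<subseteq> Q" "Q' \<noteq> {}" "zsl ns v Q'" for Q'
  proof -
    have f': "finite Q'" using finite_subset[OF that(1) fin] .
    have "image_mset v (mset_set Q') \<subseteq># image_mset v (mset_set Q)"
      by (intro image_mset_subseteq_mono subset_imp_msubset_mset_set that fin)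
    moreover have "image_mset v (mset_set Q') \<noteq> {#}" using that(2) f' by (simp add: mset_set_empty_iff)
    moreover have "zero_sum ns (image_mset v (mset_set Q'))" using zsl_iff[OF f'] that(3) by simp
    ultimately have "image_mset v (mset_set Q') = image_mset v (mset_set Q)"
      by (rule a3)
    then have "size (image_mset v (mset_set Q')) = size (image_mset v (mset_set Q))" by simp
    then have "card Q' = card Q" by simp
    then show ?thesis using card_subset_eq[OF fin that(1)] by simp
  qed
  then show "ablock ns v Q" unfolding ablock_def using fin z ne by blast
next
  assume b: "ablock ns v Q"
  have "C = image_mset v (mset_set Q)"
    if C: "C \<subseteq># image_mset v (mset_set Q)" "C \<noteq> {#}" "zero_sum ns C" for C
  proof -
    obtain D where "image_mset v (mset_set Q) = C + D" using C(1) mset_subset_eq_exists_conv by blast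
    then obtain C' D' where CD: "mset_set Q = C' + D'" "C = image_mset v C'"
      using image_mset_eq_plusD by blast
    have sub: "C' \<subseteq># mset_set Q" using CD by simp
    have eq: "mset_set (set_mset C') = C'" using msub_set[OF sub] .
    have s: "set_mset C' \<subseteq> Q" using set_mset_mono[OF sub] fin by simp
    have ne: "set_mset C' \<noteq> {}" using C CD by auto
    have "zsl ns v (set_mset C')" using zsl_iff[of "set_mset C'" ns v] C CD eq by simp
    then have "set_mset C' = Q" using b s ne unfolding ablock_def by blast
    then have "C' = mset_set Q" using eq by simp
    then show ?thesis using CD by simp
  qed
  moreover have "zero_sum ns (image_mset v (mset_set Q))" using b fin zsl_iff unfolding ablock_def by blast
  moreover have "image_mset v (mset_set Q) \<noteq> {#}" using b fin unfolding ablock_def by (simp add: mset_set_empty_iff)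
  ultimately show "atom ns (image_mset v (mset_set Q))" unfolding atom_def by blast
qed

lemma atom_ne: "atom ns A \<Longrightarrow> A \<noteq> {#}" unfolding atom_def by simp
lemma atom_zs: "atom ns A \<Longrightarrow> zero_sum ns A" unfolding atom_def by simp

lemma lift_fact:
  "image_mset v M = sum_mset F \<Longrightarrow> \<exists>P. sum_mset P = M \<and> image_mset (image_mset v) P = F"
proof (induction F arbitrary: M)
  case empty thus ?case by (intro exI[of _ "{#}"]) simp
next
  case (add A F)
  from add.prems have "image_mset v M = A + sum_mset F" by simp
  then obtain M1 M2 where M: "M = M1 + M2" "A = image_mset v M1" "sum_mset F = image_mset v M2"
    using image_mset_eq_plusD by blast
  from add.IH[OF M(3)[symmetric]] obtain P where "sum_mset P = M2" "image_mset (image_mset v) P = F" by blast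
  then show ?case using M by (intro exI[of _ "add_mset M1 P"]) simp
qed

lemma mset_part_aux:
  assumes "\<forall>x. count (sum_mset P) x \<le> 1" "\<forall>Q\<in>#P. Q \<noteq> {#}"
  shows "card (set_mset (image_mset set_mset P)) = size P \<and> pairwise disjnt (set_mset (image_mset set_mset P))"
  using assms
proof (induction P)
  case empty then show ?case by simp
next
  case (add Q P)
  have c: "\<forall>x. count (sum_mset P) x \<le> 1"
  proof
    fix x
    have "count (sum_mset P) x \<le> count (sum_mset (add_mset Q P)) x" by simp
    also have "\<dots> \<le> 1" using add.prems(1) by blast
    finally show "count (sum_mset P) x \<le> 1" .
  qed
  have IH: "card (set_mset (image_mset set_mset P)) = size P \<and> pairwise disjnt (set_mset (image_mset set_mset P))"
    using add.IH c add.prems(2) by simp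
  have disj: "set_mset Q \<inter> set_mset (sum_mset P) = {}"
  proof (rule ccontr)
    assume "set_mset Q \<inter> set_mset (sum_mset P) \<noteq> {}"
    then obtain x where "x \<in># Q" "x \<in># sum_mset P" by blast
    then have a: "0 < count Q x" "0 < count (sum_mset P) x" by simp_all
    have "count (Q + sum_mset P) x = count Q x + count (sum_mset P) x" by simp
    with a have "count (Q + sum_mset P) x \<ge> 2" by linarith
    moreover have "count (sum_mset (add_mset Q P)) x \<le> 1" using add.prems(1) by blast
    ultimately show False by simp
  qed
  have sub: "\<And>Q'. Q' \<in># P \<Longrightarrow> set_mset Q' \<subseteq> set_mset (sum_mset P)"
    by (auto simp: set_mset_Union_mset)
  have notin: "set_mset Q \<notin> set_mset (image_mset set_mset P)"
  proof
    assume "set_mset Q \<in> set_mset (image_mset set_mset P)"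
    then obtain Q' where "Q' \<in># P" "set_mset Q' = set_mset Q" by auto
    then have "set_mset Q \<subseteq> set_mset (sum_mset P)" using sub by metis
    moreover have "set_mset Q \<noteq> {}" using add.prems(2) by simp
    ultimately show False using disj by blast
  qed
  have "card (set_mset (image_mset set_mset (add_mset Q P))) = size (add_mset Q P)"
    using IH notin by simp
  moreover have "pairwise disjnt (set_mset (image_mset set_mset (add_mset Q P)))"
    using IH disj sub by (auto simp: pairwise_insert disjnt_def)
  ultimately show ?case by blast
qed

lemma lift_partition:
  assumes fin: "finite S" and F: "\<forall>A\<in>#F. atom ns A" "sum_mset F = image_mset v (mset_set S)"
  shows "\<exists>\<P>. card \<P> = size F \<and> pairwise disjnt \<P> \<and> \<Union>\<P> = S \<and> (\<forall>Q\<in>\<P>. ablock ns v Q)"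
proof -
  from lift_fact[OF F(2)[symmetric]] obtain P where P: "sum_mset P = mset_set S" "image_mset (image_mset v) P = F"
    by blast
  have subP: "Q \<subseteq># mset_set S" if "Q \<in># P" for Q
  proof -
    from multi_member_split[OF that] obtain P' where "P = add_mset Q P'" by blast
    then have "mset_set S = Q + sum_mset P'" using P(1) by simp
    then show ?thesis by simp
  qed
  have eqQ: "mset_set (set_mset Q) = Q" if "Q \<in># P" for Q using msub_set[OF subP[OF that]] .
  have atQ: "atom ns (image_mset v Q)" if "Q \<in># P" for Q
  proof -
    have "image_mset v Q \<in># F" unfolding P(2)[symmetric] using that by simp
    then show ?thesis using F(1) by blast
  qed
  have neQ: "Q \<noteq> {#}" if "Q \<in># P" for Q using atom_ne[OF atQ[OF that]] by auto
  have cnt: "\<forall>x. count (sum_mset P) x \<le> 1" using P(1) by (simp add: count_mset_set')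
  define \<P> where "\<P> = set_mset (image_mset set_mset P)"
  have 1: "card \<P> = size F \<and> pairwise disjnt \<P>"
  proof -
    have "size F = size P" by (subst P(2)[symmetric]) simp
    then show ?thesis using mset_part_aux[OF cnt] neQ unfolding \<P>_def by simp
  qed
  have 2: "\<Union>\<P> = S"
  proof -
    have "set_mset (sum_mset P) = S" using P(1) fin by simp
    then show ?thesis unfolding \<P>_def by (simp add: set_mset_Union_mset)
  qed
  have 3: "\<forall>Q\<in>\<P>. ablock ns v Q"
  proof
    fix Q0 assume "Q0 \<in> \<P>"
    then obtain Q where Q: "Q \<in># P" "Q0 = set_mset Q" unfolding \<P>_def by auto
    have "atom ns (image_mset v (mset_set Q0))" using atQ[OF Q(1)] eqQ[OF Q(1)] Q(2) by simp
    then show "ablock ns v Q0" using atom_ablock[of Q0 ns v] Q(2) by simp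
  qed
  show ?thesis using 1 2 3 by blast
qed

lemma sum_mset_partition:
  assumes "finite \<P>" "\<forall>Q\<in>\<P>. finite Q" "pairwise disjnt \<P>"
  shows "sum_mset (image_mset mset_set (mset_set \<P>)) = mset_set (\<Union>\<P>)"
  using assms
proof (induction \<P> rule: finite_induct)
  case empty then show ?case by simp
next
  case (insert Q \<P>)
  have d: "Q \<inter> \<Union>\<P> = {}" using insert.prems insert.hyps
    by (auto simp: pairwise_insert disjnt_def)
  have "mset_set (\<Union>(insert Q \<P>)) = mset_set Q + mset_set (\<Union>\<P>)"
    using d insert by (simp add: mset_set_Union)
  then show ?case using insert by (simp add: pairwise_insert)
qed

lemma image_sum_mset: "image_mset f (sum_mset X) = sum_mset (image_mset (image_mset f) X)"
  by (induction X) auto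

lemma build_partition:
  assumes fin: "finite S" and P: "pairwise disjnt \<P>" "\<Union>\<P> = S" "\<forall>Q\<in>\<P>. ablock ns v Q"
  shows "card \<P> \<in> Lset ns (image_mset v (mset_set S))"
proof -
  have finP: "finite \<P>" using P(2) fin by (metis finite_UnionD)
  have finQ: "\<forall>Q\<in>\<P>. finite Q" using P(3) unfolding ablock_def by blast
  define F where "F = image_mset (\<lambda>Q. image_mset v (mset_set Q)) (mset_set \<P>)"
  have "size F = card \<P>" unfolding F_def by simp
  moreover have "\<forall>A\<in>#F. atom ns A" unfolding F_def using finP finQ P(3) atom_ablock by auto
  moreover have "sum_mset F = image_mset v (mset_set S)"
  proof -
    have "sum_mset F = sum_mset (image_mset (image_mset v) (image_mset mset_set (mset_set \<P>)))"
      unfolding F_def by (simp add: multiset.map_comp o_def)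
    also have "\<dots> = image_mset v (sum_mset (image_mset mset_set (mset_set \<P>)))"
      by (simp add: image_sum_mset)
    also have "\<dots> = image_mset v (mset_set S)" using sum_mset_partition[OF finP finQ P(1)] P(2) by simp
    finally show ?thesis .
  qed
  ultimately show ?thesis unfolding Lset_def mem_Collect_eq by metis
qed

lemma zero_sum_add: "zero_sum ns A \<Longrightarrow> zero_sum ns B \<Longrightarrow> zero_sum ns (A + B)"
  unfolding zero_sum_def by (auto simp: mod_add_eq[symmetric])

lemma zero_sum_partition:
  assumes fin: "finite S" and P: "pairwise disjnt \<P>" "\<Union>\<P> = S" "\<forall>Q\<in>\<P>. ablock ns v Q"
  shows "zero_sum ns (image_mset v (mset_set S))"
proof -
  obtain F where "(\<forall>A\<in>#F. atom ns A) \<and> sum_mset F = image_mset v (mset_set S)"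
    using build_partition[OF assms] unfolding Lset_def by blast
  moreover have "(\<forall>A\<in>#F. atom ns A) \<Longrightarrow> zero_sum ns (sum_mset F)" for F
  proof (induction F)
    case empty then show ?case by (simp add: zero_sum_def)
  next
    case (add A F)
    then have "zero_sum ns A" using atom_zs by simp
    moreover have "zero_sum ns (sum_mset F)" using add by simp
    ultimately show ?case by (simp add: zero_sum_add)
  qed
  ultimately show ?thesis by metis
qed

lemma sum_split_lab:
  assumes "finite Q"
  shows "(\<Sum>l\<in>Q. g l) = (\<Sum>t\<in>{t. Pos t \<in> Q}. g (Pos t)) + (\<Sum>t\<in>{t. Neg t \<in> Q}. g (Neg t))
     + (if Hh \<in> Q then g Hh else 0) + (if NHh \<in> Q then g NHh else 0)"
proof -
  have fP: "finite {t. Pos t \<in> Q}" using finite_vimageI[of Q Pos] assms by (simp add: inj_def vimage_def)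
  have fN: "finite {t. Neg t \<in> Q}" using finite_vimageI[of Q Neg] assms by (simp add: inj_def vimage_def)
  have Qeq: "Q = ((Pos ` {t. Pos t \<in> Q} \<union> Neg ` {t. Neg t \<in> Q}) \<union> (Q \<inter> {Hh})) \<union> (Q \<inter> {NHh})"
    by (auto, case_tac x, auto)
  have "(\<Sum>l\<in>Q. g l) = (\<Sum>l\<in>Pos ` {t. Pos t \<in> Q}. g l) + (\<Sum>l\<in>Neg ` {t. Neg t \<in> Q}. g l)
     + (\<Sum>l\<in>Q \<inter> {Hh}. g l) + (\<Sum>l\<in>Q \<inter> {NHh}. g l)"
    apply (subst Qeq)
    apply (subst sum.union_disjoint, use fP fN in auto)+
    done
  also have "\<dots> = (\<Sum>t\<in>{t. Pos t \<in> Q}. g (Pos t)) + (\<Sum>t\<in>{t. Neg t \<in> Q}. g (Neg t))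
     + (if Hh \<in> Q then g Hh else 0) + (if NHh \<in> Q then g NHh else 0)"
    by (simp add: sum.reindex inj_on_def Int_insert_right)
  finally show ?thesis .
qed



lemma card_split:
  assumes "finite Q"
  shows "card Q = card {t. Pos t \<in> Q} + card {t. Neg t \<in> Q} + (if Hh \<in> Q then 1 else 0) + (if NHh \<in> Q then 1 else 0)"
  using sum_split_lab[OF assms, of "\<lambda>_. (1::nat)"] by (simp only: card_eq_sum[symmetric])

lemma dvd_small_int: "(n::int) dvd x \<Longrightarrow> \<bar>x\<bar> < \<bar>n\<bar> \<Longrightarrow> x = 0"
proof (rule ccontr)
  assume "(n::int) dvd x" "\<bar>x\<bar> < \<bar>n\<bar>" "x \<noteq> 0"
  then have "\<bar>n\<bar> \<le> \<bar>x\<bar>" using dvd_imp_le_int by blast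
  then show False using \<open>\<bar>x\<bar> < \<bar>n\<bar>\<close> by linarith
qed

lemma ablockI:
  assumes "finite Q" "Q \<noteq> {}" "zsl ns v Q"
    "\<And>Q'. Q' \<subseteq> Q \<Longrightarrow> Q' \<noteq> {} \<Longrightarrow> zsl ns v Q' \<Longrightarrow> Q' = Q"
  shows "ablock ns v Q"
  unfolding ablock_def using assms by blast

lemma ablockD:
  assumes "ablock ns v Q"
  shows "finite Q" "Q \<noteq> {}" "zsl ns v Q"
    "\<And>Q'. Q' \<subseteq> Q \<Longrightarrow> Q' \<noteq> {} \<Longrightarrow> zsl ns v Q' \<Longrightarrow> Q' = Q"
  using assms unfolding ablock_def by blast+

lemma pair_ablock:
  assumes "p \<noteq> q" "zsl ns v {p,q}" "\<not> zsl ns v {p}" "\<not> zsl ns v {q}"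
  shows "ablock ns v {p,q}"
proof (rule ablockI)
  fix Q' assume Q': "Q' \<subseteq> {p,q}" "Q' \<noteq> {}" "zsl ns v Q'"
  have "Q' = {} \<or> Q' = {p} \<or> Q' = {q} \<or> Q' = {p,q}" using Q'(1) by blast
  then show "Q' = {p,q}" using Q' assms by blast
qed (use assms in auto)

lemma delta_from_partitions:
  assumes fin: "finite S" and d: "0 < d"
    and up: "\<And>\<P>. pairwise disjnt \<P> \<Longrightarrow> \<Union>\<P> = S \<Longrightarrow> (\<forall>Q\<in>\<P>. ablock ns v Q) \<Longrightarrow> card \<P> = 2 \<or> card \<P> = d + 2"
    and A: "pairwise disjnt \<P>A" "\<Union>\<P>A = S" "\<forall>Q\<in>\<P>A. ablock ns v Q" "card \<P>A = 2"
    and B: "pairwise disjnt \<P>B" "\<Union>\<P>B = S" "\<forall>Q\<in>\<P>B. ablock ns v Q" "card \<P>B = d + 2"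
  shows "d \<in> DeltaG ns"
proof -
  define M where "M = image_mset v (mset_set S)"
  have z: "zero_sum ns M" unfolding M_def using zero_sum_partition[OF fin A(1-3)] .
  have L2: "2 \<in> Lset ns M" unfolding M_def using build_partition[OF fin A(1-3)] A(4) by simp
  have Ld: "d + 2 \<in> Lset ns M" unfolding M_def using build_partition[OF fin B(1-3)] B(4) by simp
  have Lsub: "Lset ns M \<subseteq> {2, d + 2}"
  proof
    fix k assume "k \<in> Lset ns M"
    then obtain F where F: "k = size F" "\<forall>A\<in>#F. atom ns A" "sum_mset F = M"
      unfolding Lset_def by blast
    obtain \<P> where P: "card \<P> = size F" "pairwise disjnt \<P>" "\<Union>\<P> = S" "\<forall>Q\<in>\<P>. ablock ns v Q"
      using lift_partition[OF fin F(2)] F(3) unfolding M_def by blast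
    show "k \<in> {2, d + 2}" using up[OF P(2-4)] P(1) F(1) by auto
  qed
  have "d \<in> delta_set (Lset ns M)"
    unfolding delta_set_def
  proof (intro CollectI conjI bexI[of _ 2])
    show "0 < d" by (rule d)
    show "2 + d \<in> Lset ns M" using Ld by (simp add: add.commute)
    show "\<forall>k. 2 < k \<and> k < 2 + d \<longrightarrow> k \<notin> Lset ns M" using Lsub by auto
    show "2 \<in> Lset ns M" by (rule L2)
  qed
  then show ?thesis unfolding DeltaG_def using z by blast
qed

definition vec :: "nat list \<Rightarrow> (nat \<Rightarrow> nat) \<Rightarrow> nat list" where
  "vec ns f = map f [0..<length ns]"

lemma vec_nth[simp]: "i < length ns \<Longrightarrow> vec ns f ! i = f i"
  unfolding vec_def by simp

lemma vec_Gcar: "(\<And>i. i < length ns \<Longrightarrow> f i < ns ! i) \<Longrightarrow> vec ns f \<in> Gcar ns"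
  unfolding vec_def Gcar_def by simp

lemma arith_cnt:
  assumes "0 < (n::nat)"
  shows "(a + b * (n - 1) + h) mod n = 0 \<longleftrightarrow> int n dvd (int a - int b + int h)"
proof -
  have e: "int (a + b * (n - 1) + h) = (int a - int b + int h) + int b * int n"
  proof -
    have e0: "b * (n - 1) + b = b * n" using assms by (cases n) (auto simp: algebra_simps)
    have "int (b * (n - 1)) + int b = int b * int n" using arg_cong[OF e0, of int] by simp
    then show ?thesis by simp
  qed
  have "(a + b * (n - 1) + h) mod n = 0 \<longleftrightarrow> int n dvd int (a + b * (n - 1) + h)"
    by (simp only: dvd_eq_mod_eq_0[symmetric] of_nat_dvd_iff)
  also have "\<dots> \<longleftrightarrow> int n dvd (int a - int b + int h)"
    unfolding e by (simp add: dvd_add_left_iff)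
  finally show ?thesis .
qed

definition w1 :: "nat \<Rightarrow> nat \<Rightarrow> lab \<Rightarrow> nat" where
  "w1 n m l = (case l of Pos t \<Rightarrow> 1 | Neg t \<Rightarrow> n - 1 | Hh \<Rightarrow> m | NHh \<Rightarrow> 0)"

definition v1 :: "nat list \<Rightarrow> nat \<Rightarrow> lab \<Rightarrow> nat list" where
  "v1 ns m l = vec ns (\<lambda>i. if i = length ns - 1 then w1 (last ns) m l else 0)"

lemma zsl1:
  assumes ne: "ns \<noteq> []" and gt: "\<forall>i<length ns. 1 < ns ! i" and mn: "m < last ns" and fin: "finite Q"
  shows "zsl ns (v1 ns m) Q \<longleftrightarrow> int (last ns) dvd
    (int (card {t. Pos t \<in> Q}) - int (card {t. Neg t \<in> Q}) + int (if Hh \<in> Q then m else 0))"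
proof -
  let ?l = "length ns - 1"
  let ?n = "last ns"
  have l: "?l < length ns" "ns ! ?l = ?n" using ne by (auto simp: last_conv_nth)
  have n1: "1 < ?n" using gt l by auto
  have G: "v1 ns m l \<in> Gcar ns" for l
    unfolding v1_def
  proof (rule vec_Gcar)
    fix i assume i: "i < length ns"
    show "(if i = ?l then w1 ?n m l else 0) < ns ! i"
    proof (cases "i = ?l")
      case True then show ?thesis using l n1 mn by (cases l) (auto simp: w1_def)
    next
      case False then show ?thesis using gt i by auto
    qed
  qed
  define A where "A = card {t. Pos t \<in> Q} + card {t. Neg t \<in> Q} * (?n - 1) + (if Hh \<in> Q then m else 0)"
  have S: "(\<Sum>l\<in>Q. v1 ns m l ! i) = (if i = ?l then A else 0)" if i: "i < length ns" for i
  proof -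
    have "(\<Sum>l\<in>Q. v1 ns m l ! i) = (\<Sum>l\<in>Q. if i = ?l then w1 ?n m l else 0)"
      unfolding v1_def using i by simp
    also have "\<dots> = (if i = ?l then A else 0)"
      using sum_split_lab[OF fin, of "w1 ?n m"] unfolding A_def by (simp add: w1_def)
    finally show ?thesis .
  qed
  have "zsl ns (v1 ns m) Q \<longleftrightarrow> A mod ?n = 0"
    unfolding zsl_def using G S l by auto
  also have "\<dots> \<longleftrightarrow> int ?n dvd (int (card {t. Pos t \<in> Q}) - int (card {t. Neg t \<in> Q}) + int (if Hh \<in> Q then m else 0))"
    unfolding A_def using n1 arith_cnt by simp
  finally show ?thesis .
qed



lemma part1:
  assumes ne: "ns \<noteq> []" and gt: "\<forall>i<length ns. 1 < ns ! i" and m2: "2 \<le> m" and mn: "m < last ns"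
  shows "m - 1 \<in> DeltaG ns"
proof -
  define n where "n = last ns"
  define v where "v = v1 ns m"
  define S where "S = Pos ` {..<n} \<union> Neg ` {..<m} \<union> {Hh}"
  have n1: "1 < n" using gt ne unfolding n_def by (auto simp: last_conv_nth)
  have mn': "m < n" using mn unfolding n_def .
  have finS: "finite S" unfolding S_def by simp
  define a where "a Q = card {t. Pos t \<in> Q}" for Q
  define b where "b Q = card {t. Neg t \<in> Q}" for Q
  have zs: "zsl ns v Q \<longleftrightarrow> int n dvd (int (a Q) - int (b Q) + int (if Hh \<in> Q then m else 0))"
    if "finite Q" for Q
    unfolding v_def a_def b_def n_def using zsl1[OF ne gt mn that] .
  have aS: "{t. Pos t \<in> Q} \<subseteq> {..<n}" if "Q \<subseteq> S" for Q using that unfolding S_def by auto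
  have bS: "{t. Neg t \<in> Q} \<subseteq> {..<m}" if "Q \<subseteq> S" for Q using that unfolding S_def by auto
  have aleq: "a Q \<le> n" if "Q \<subseteq> S" for Q unfolding a_def using card_mono[OF _ aS[OF that]] by simp
  have bleq: "b Q \<le> m" if "Q \<subseteq> S" for Q unfolding b_def using card_mono[OF _ bS[OF that]] by simp
  have NS: "NHh \<notin> S" unfolding S_def by auto
  have cardQ: "card Q = a Q + b Q + (if Hh \<in> Q then 1 else 0)" if "Q \<subseteq> S" for Q
  proof -
    have "NHh \<notin> Q" using NS that by blast
    then show ?thesis using card_split[OF finite_subset[OF that finS]] unfolding a_def b_def by simp
  qed
  have pair_zs: "zsl ns v {Pos t, Neg t'}" for t t'
  proof -
    have "{x. Pos x \<in> {Pos t, Neg t'}} = {t}" "{x. Neg x \<in> {Pos t, Neg t'}} = {t'}" by auto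
    then show ?thesis using zs[of "{Pos t, Neg t'}"] unfolding a_def b_def by simp
  qed
  have pair_ab: "ablock ns v {Pos t, Neg t'}" for t t'
  proof (rule pair_ablock)
    show "\<not> zsl ns v {Pos t}"
    proof
      assume "zsl ns v {Pos t}"
      moreover have "{x. Pos x \<in> {Pos t}} = {t}" "{x. Neg x \<in> {Pos t}} = {}" by auto
      ultimately have "int n dvd 1" using zs[of "{Pos t}"] unfolding a_def b_def by simp
      then show False using n1 by simp
    qed
    show "\<not> zsl ns v {Neg t'}"
    proof
      assume "zsl ns v {Neg t'}"
      moreover have "{x. Pos x \<in> {Neg t'}} = {}" "{x. Neg x \<in> {Neg t'}} = {t'}" by auto
      ultimately have "int n dvd - 1" using zs[of "{Neg t'}"] unfolding a_def b_def by simp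
      then show False using n1 by simp
    qed
  qed (auto simp: pair_zs)
  define QA1 where "QA1 = insert Hh (Neg ` {..<m})"
  define QA2 where "QA2 = Pos ` {..<n}"
  have abA1: "ablock ns v QA1"
  proof (rule ablockI)
    show fin: "finite QA1" "QA1 \<noteq> {}" unfolding QA1_def by auto
    have "{t. Pos t \<in> QA1} = {}" "{t. Neg t \<in> QA1} = {..<m}" "Hh \<in> QA1" unfolding QA1_def by auto
    then show "zsl ns v QA1" using zs[OF fin(1)] unfolding a_def b_def by simp
    fix Q' assume Q': "Q' \<subseteq> QA1" "Q' \<noteq> {}" "zsl ns v Q'"
    have fQ': "finite Q'" using finite_subset[OF Q'(1) fin(1)] .
    have a0: "{t. Pos t \<in> Q'} = {}" using Q'(1) unfolding QA1_def by auto
    have bsub: "{t. Neg t \<in> Q'} \<subseteq> {..<m}" using Q'(1) unfolding QA1_def by auto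
    have bm: "b Q' \<le> m" unfolding b_def using card_mono[OF _ bsub] by simp
    have dv: "int n dvd (0 - int (b Q') + int (if Hh \<in> Q' then m else 0))"
      using zs[OF fQ'] Q'(3) a0 unfolding a_def by simp
    show "Q' = QA1"
    proof (cases "Hh \<in> Q'")
      case True
      then have "int n dvd (int m - int (b Q'))" using dv by simp
      then have "int m - int (b Q') = 0" by (rule dvd_small_int) (use bm mn' in auto)
      then have "b Q' = m" by simp
      then have "{t. Neg t \<in> Q'} = {..<m}" using card_subset_eq[OF _ bsub] unfolding b_def by simp
      then have "QA1 \<subseteq> Q'" using True unfolding QA1_def by auto
      then show ?thesis using Q'(1) by auto
    next
      case False
      then have "int n dvd int (b Q')" using dv by simp
      then have "int (b Q') = 0" by (rule dvd_small_int) (use bm mn' in auto)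
      then have "{t. Neg t \<in> Q'} = {}" unfolding b_def using finite_subset[OF bsub] by simp
      then have "Q' = {}" using Q'(1) False unfolding QA1_def by auto
      then show ?thesis using Q'(2) by simp
    qed
  qed
  have abA2: "ablock ns v QA2"
  proof (rule ablockI)
    show fin: "finite QA2" "QA2 \<noteq> {}" unfolding QA2_def using n1 by auto
    have "{t. Pos t \<in> QA2} = {..<n}" "{t. Neg t \<in> QA2} = {}" "Hh \<notin> QA2" unfolding QA2_def by auto
    then show "zsl ns v QA2" using zs[OF fin(1)] unfolding a_def b_def by simp
    fix Q' assume Q': "Q' \<subseteq> QA2" "Q' \<noteq> {}" "zsl ns v Q'"
    have fQ': "finite Q'" using finite_subset[OF Q'(1) fin(1)] .
    have b0: "{t. Neg t \<in> Q'} = {}" "Hh \<notin> Q'" using Q'(1) unfolding QA2_def by auto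
    have asub: "{t. Pos t \<in> Q'} \<subseteq> {..<n}" using Q'(1) unfolding QA2_def by auto
    have am: "a Q' \<le> n" unfolding a_def using card_mono[OF _ asub] by simp
    have dv: "int n dvd int (a Q')" using zs[OF fQ'] Q'(3) b0 unfolding b_def by simp
    show "Q' = QA2"
    proof (cases "a Q' = n")
      case True
      then have "{t. Pos t \<in> Q'} = {..<n}" using card_subset_eq[OF _ asub] unfolding a_def by simp
      then have "QA2 \<subseteq> Q'" unfolding QA2_def by auto
      then show ?thesis using Q'(1) by auto
    next
      case False
      then have "int (a Q') = 0" using dv by (intro dvd_small_int[of "int n"]) (use am in auto)
      then have "{t. Pos t \<in> Q'} = {}" unfolding a_def using finite_subset[OF asub] by simp
      then have "Q' = {}" using Q'(1) unfolding QA2_def by auto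
      then show ?thesis using Q'(2) by simp
    qed
  qed
  have neA: "QA1 \<noteq> QA2" unfolding QA1_def QA2_def by auto
  have PA: "pairwise disjnt {QA1, QA2}" "\<Union>{QA1, QA2} = S" "\<forall>Q\<in>{QA1, QA2}. ablock ns v Q" "card {QA1, QA2} = 2"
    using abA1 abA2 neA unfolding pairwise_def disjnt_def QA1_def QA2_def S_def by auto
  define QB0 where "QB0 = insert Hh (Pos ` {m..<n})"
  define PB where "PB t = {Pos t, Neg t}" for t
  have abB0: "ablock ns v QB0"
  proof (rule ablockI)
    show fin: "finite QB0" "QB0 \<noteq> {}" unfolding QB0_def by auto
    have "{t. Pos t \<in> QB0} = {m..<n}" "{t. Neg t \<in> QB0} = {}" "Hh \<in> QB0" unfolding QB0_def by auto
    then have "int n dvd (int (a QB0) - int (b QB0) + int (if Hh \<in> QB0 then m else 0))"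
      unfolding a_def b_def using mn' by (simp add: of_nat_diff)
    then show "zsl ns v QB0" using zs[OF fin(1)] by simp
    fix Q' assume Q': "Q' \<subseteq> QB0" "Q' \<noteq> {}" "zsl ns v Q'"
    have fQ': "finite Q'" using finite_subset[OF Q'(1) fin(1)] .
    have b0: "{t. Neg t \<in> Q'} = {}" using Q'(1) unfolding QB0_def by auto
    have asub: "{t. Pos t \<in> Q'} \<subseteq> {m..<n}" using Q'(1) unfolding QB0_def by auto
    have am: "a Q' \<le> n - m" unfolding a_def using card_mono[OF _ asub] by simp
    have dv: "int n dvd (int (a Q') + int (if Hh \<in> Q' then m else 0))"
      using zs[OF fQ'] Q'(3) b0 unfolding b_def by simp
    show "Q' = QB0"
    proof (cases "Hh \<in> Q'")
      case True
      then have "int n dvd (int (a Q') + int m - int n)" using dv by (simp add: dvd_diff)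
      then have "int (a Q') + int m - int n = 0" by (rule dvd_small_int) (use am m2 mn' in auto)
      then have "a Q' = n - m" by simp
      then have "{t. Pos t \<in> Q'} = {m..<n}" using card_subset_eq[OF _ asub] unfolding a_def by simp
      then have "QB0 \<subseteq> Q'" using True unfolding QB0_def by auto
      then show ?thesis using Q'(1) by auto
    next
      case False
      then have "int n dvd int (a Q')" using dv by simp
      then have "int (a Q') = 0" by (rule dvd_small_int) (use am m2 mn' in auto)
      then have "{t. Pos t \<in> Q'} = {}" unfolding a_def using finite_subset[OF asub] by simp
      then have "Q' = {}" using Q'(1) False unfolding QB0_def by auto
      then show ?thesis using Q'(2) by simp
    qed
  qed
  define PBB where "PBB = insert QB0 (PB ` {..<m})"
  have PB_inj: "inj_on PB {..<m}" unfolding inj_on_def PB_def by auto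
  have QB0_notin: "QB0 \<notin> PB ` {..<m}" unfolding QB0_def PB_def by auto
  have PBcard: "card PBB = (m - 1) + 2"
    unfolding PBB_def using QB0_notin card_image[OF PB_inj] m2 by simp
  have PBdisj: "pairwise disjnt PBB"
    unfolding PBB_def pairwise_def disjnt_def QB0_def PB_def by auto
  have PBun: "\<Union>PBB = S"
  proof
    show "\<Union>PBB \<subseteq> S" unfolding PBB_def QB0_def PB_def S_def using mn' by auto
    show "S \<subseteq> \<Union>PBB"
    proof
      fix l assume "l \<in> S"
      then consider (p) t where "l = Pos t" "t < n" | (q) t where "l = Neg t" "t < m" | (h) "l = Hh"
        unfolding S_def by auto
      then show "l \<in> \<Union>PBB"
      proof cases
        case (p t)
        show ?thesis
        proof (cases "t < m")
          case True then show ?thesis using p unfolding PBB_def PB_def by auto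
        next
          case False then show ?thesis using p unfolding PBB_def QB0_def by auto
        qed
      next
        case (q t) then show ?thesis unfolding PBB_def PB_def by auto
      next
        case h then show ?thesis unfolding PBB_def QB0_def by auto
      qed
    qed
  qed
  have PBab: "\<forall>Q\<in>PBB. ablock ns v Q" unfolding PBB_def PB_def using abB0 pair_ab by auto
  have up: "card \<P> = 2 \<or> card \<P> = (m - 1) + 2"
    if P: "pairwise disjnt \<P>" "\<Union>\<P> = S" "\<forall>Q\<in>\<P>. ablock ns v Q" for \<P>
  proof -
    have sub: "Q \<subseteq> S" if "Q \<in> \<P>" for Q using P(2) that by blast
    have ab: "ablock ns v Q" if "Q \<in> \<P>" for Q using P(3) that by blast
    have finQ: "finite Q" if "Q \<in> \<P>" for Q using ablockD(1)[OF ab[OF that]] .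
    have finP: "finite \<P>" using P(2) finS by (metis finite_UnionD)
    have disj: "Q1 \<inter> Q2 = {}" if "Q1 \<in> \<P>" "Q2 \<in> \<P>" "Q1 \<noteq> Q2" for Q1 Q2
      using P(1) that unfolding pairwise_def disjnt_def by blast
    have HS: "Hh \<in> S" unfolding S_def by simp
    then obtain QH where QH: "QH \<in> \<P>" "Hh \<in> QH" using P(2) by blast
    have dvH: "int n dvd (int (a QH) - int (b QH) + int m)"
      using zs[OF finQ[OF QH(1)]] ablockD(3)[OF ab[OF QH(1)]] QH(2) by simp
    have aH: "a QH \<le> n" and bH: "b QH \<le> m" using aleq bleq sub QH(1) by auto
    have cases2: "int (a QH) - int (b QH) + int m = 0 \<or> int (a QH) - int (b QH) + int m = int n"
    proof (rule ccontr)
      assume c: "\<not> ?thesis"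
      have "int n dvd (int (a QH) - int (b QH) + int m - int n)" using dvH by (simp add: dvd_diff)
      then have "int (a QH) - int (b QH) + int m - int n = 0"
        by (rule dvd_small_int) (use c aH bH mn' in auto)
      then show False using c by simp
    qed
    have fQH: "finite QH" using finQ[OF QH(1)] .
    show ?thesis
    proof (cases "int (a QH) - int (b QH) + int m = 0")
      case True
      then have aH0: "a QH = 0" and bHm: "b QH = m" using bH by auto
      have negH: "{t. Neg t \<in> QH} = {..<m}"
        using card_subset_eq[OF _ bS[OF sub[OF QH(1)]]] bHm unfolding b_def by simp
      have posH: "{t. Pos t \<in> QH} = {}"
        using aH0 finite_subset[OF aS[OF sub[OF QH(1)]]] unfolding a_def by simp
      have other: "Pos 0 \<in> Q" if Q: "Q \<in> \<P>" "Q \<noteq> QH" for Q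
      proof -
        have dQ: "Q \<inter> QH = {}" using disj[OF Q(1) QH(1) Q(2)] .
        have nH: "Hh \<notin> Q" using dQ QH(2) by blast
        have nN: "{t. Neg t \<in> Q} = {}"
        proof -
          have "Neg t \<notin> Q" for t
          proof
            assume "Neg t \<in> Q"
            then have "t < m" using bS[OF sub[OF Q(1)]] by blast
            then have "Neg t \<in> QH" using negH by blast
            then show False using dQ \<open>Neg t \<in> Q\<close> by blast
          qed
          then show ?thesis by blast
        qed
        have dv: "int n dvd int (a Q)"
          using zs[OF finQ[OF Q(1)]] ablockD(3)[OF ab[OF Q(1)]] nH nN unfolding b_def by simp
        obtain l where l: "l \<in> Q" using ablockD(2)[OF ab[OF Q(1)]] by blast
        then have "l \<in> S" using sub[OF Q(1)] by blast
        moreover have "l \<noteq> Neg t" for t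
        proof
          assume "l = Neg t"
          then have "t \<in> {t. Neg t \<in> Q}" using l by simp
          then show False using nN by simp
        qed
        moreover have "l \<noteq> Hh" using l nH by blast
        ultimately obtain t where "l = Pos t" unfolding S_def by blast
        then have "t \<in> {t. Pos t \<in> Q}" using l by simp
        moreover have "finite {t. Pos t \<in> Q}" using finite_subset[OF aS[OF sub[OF Q(1)]]] by simp
        ultimately have "card {t. Pos t \<in> Q} > 0" using card_gt_0_iff by blast
        then have "a Q \<noteq> 0" unfolding a_def by simp
        moreover have "a Q \<le> n" using aleq sub Q(1) by blast
        ultimately have abs: "\<bar>int (a Q) - int n\<bar> < \<bar>int n\<bar>" by simp
        have "int (a Q) - int n = 0" using dvd_small_int[OF dvd_diff[OF dv dvd_refl] abs] .
        then have "a Q = n" by simp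
        then have "{t. Pos t \<in> Q} = {..<n}"
          using card_subset_eq[OF _ aS[OF sub[OF Q(1)]]] unfolding a_def by simp
        then have "0 \<in> {t. Pos t \<in> Q}" using n1 by simp
        then show ?thesis by simp
      qed
      have "Pos 0 \<in> S" unfolding S_def using n1 by simp
      then obtain QP where QP: "QP \<in> \<P>" "Pos 0 \<in> QP" using P(2) by blast
      have QPH: "QP \<noteq> QH" using QP(2) posH by auto
      have "\<P> = {QH, QP}"
      proof
        show "\<P> \<subseteq> {QH, QP}"
        proof
          fix Q assume Q: "Q \<in> \<P>"
          show "Q \<in> {QH, QP}"
          proof (cases "Q = QH")
            case False
            then have "Pos 0 \<in> Q" using other Q by blast
            then have "Q = QP" using disj[OF Q QP(1)] QP(2) by blast
            then show ?thesis by simp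
          qed simp
        qed
        show "{QH, QP} \<subseteq> \<P>" using QH QP by simp
      qed
      then show ?thesis using QPH by simp
    next
      case False
      then have eqn: "int (a QH) - int (b QH) + int m = int n" using cases2 by simp
      have b0: "b QH = 0"
      proof (rule ccontr)
        assume "b QH \<noteq> 0"
        then obtain t' where t': "Neg t' \<in> QH" unfolding b_def by (metis (no_types, lifting) card.empty Collect_empty_eq)
        have "a QH \<noteq> 0" using eqn mn' \<open>b QH \<noteq> 0\<close> by linarith
        then obtain t where t: "Pos t \<in> QH" unfolding a_def by (metis (no_types, lifting) card.empty Collect_empty_eq)
        have "{Pos t, Neg t'} = QH"
          using ablockD(4)[OF ab[OF QH(1)], of "{Pos t, Neg t'}"] t t' pair_zs by blast
        then show False using QH(2) by auto
      qed
      then have aH: "a QH = n - m" using eqn by linarith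
      have cH: "card QH = n - m + 1" using cardQ[OF sub[OF QH(1)]] aH b0 QH(2) by simp
      have two: "card Q = 2" if Q: "Q \<in> \<P>" "Q \<noteq> QH" for Q
      proof -
        have dQ: "Q \<inter> QH = {}" using disj[OF Q(1) QH(1) Q(2)] .
        have nH: "Hh \<notin> Q" using dQ QH(2) by blast
        have "{t. Pos t \<in> Q} \<inter> {t. Pos t \<in> QH} = {}" using dQ by blast
        moreover have "{t. Pos t \<in> Q} \<union> {t. Pos t \<in> QH} \<subseteq> {..<n}"
          using aS[OF sub[OF Q(1)]] aS[OF sub[OF QH(1)]] by blast
        moreover have "finite {t. Pos t \<in> Q}" "finite {t. Pos t \<in> QH}"
          using finite_subset[OF aS[OF sub[OF Q(1)]]] finite_subset[OF aS[OF sub[OF QH(1)]]] by auto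
        ultimately have "a Q + a QH \<le> n" unfolding a_def
          by (metis card_Un_disjoint card_lessThan card_mono finite_lessThan)
        then have aQ: "a Q \<le> m" using aH mn' by linarith
        have bQ: "b Q \<le> m" using bleq sub Q(1) by blast
        have dv: "int n dvd (int (a Q) - int (b Q))"
          using zs[OF finQ[OF Q(1)]] ablockD(3)[OF ab[OF Q(1)]] nH by simp
        then have "int (a Q) - int (b Q) = 0" by (rule dvd_small_int) (use aQ bQ mn' in auto)
        then have ab_eq: "a Q = b Q" by simp
        have "card Q \<noteq> 0" using ablockD(1,2)[OF ab[OF Q(1)]] by simp
        then have "a Q + b Q \<noteq> 0" using cardQ[OF sub[OF Q(1)]] nH by simp
        then have "a Q \<noteq> 0" "b Q \<noteq> 0" using ab_eq by auto
        then obtain t t' where t: "Pos t \<in> Q" "Neg t' \<in> Q" unfolding a_def b_def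
          by (metis (no_types, lifting) card.empty Collect_empty_eq)
        have "{Pos t, Neg t'} = Q"
          using ablockD(4)[OF ab[OF Q(1)], of "{Pos t, Neg t'}"] t pair_zs by blast
        then show ?thesis by auto
      qed
      have "card S = n + m + 1"
      proof -
        have "{t. Pos t \<in> S} = {..<n}" "{t. Neg t \<in> S} = {..<m}" unfolding S_def by auto
        then show ?thesis using cardQ[of S] HS unfolding a_def b_def by simp
      qed
      moreover have "card S = sum card \<P>"
        using card_Union_disjoint[OF P(1)] finQ P(2) by metis
      moreover have "sum card \<P> = card QH + sum card (\<P> - {QH})"
        using sum.remove[OF finP QH(1)] .
      moreover have "sum card (\<P> - {QH}) = 2 * card (\<P> - {QH})"
        using two by simp
      ultimately have "card (\<P> - {QH}) = m" using cH mn' by linarith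
      then have "card \<P> = m + 1" using finP QH(1) by (metis card_Suc_Diff1 Suc_eq_plus1)
      then show ?thesis using m2 by simp
    qed
  qed
  have d0: "0 < m - 1" using m2 by simp
  show ?thesis
    using delta_from_partitions[of S "m - 1" ns v, OF finS d0 up PA PBdisj PBun PBab PBcard] .
qed



definition cs :: "nat list \<Rightarrow> nat list" where
  "cs ns = concat (map (\<lambda>i. replicate (ns ! i div 2) i) [0..<length ns])"

definition kk :: "nat list \<Rightarrow> nat \<Rightarrow> nat \<Rightarrow> nat" where
  "kk ns K i = card {t. t < K \<and> cs ns ! t = i}"

definition w2 :: "nat list \<Rightarrow> nat \<Rightarrow> nat \<Rightarrow> lab \<Rightarrow> nat" where
  "w2 ns K i l = (case l of Pos t \<Rightarrow> if cs ns ! t = i then 1 else 0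
     | Neg t \<Rightarrow> if cs ns ! t = i then ns ! i - 1 else 0
     | Hh \<Rightarrow> (ns ! i - kk ns K i) mod ns ! i | NHh \<Rightarrow> kk ns K i)"

definition v2 :: "nat list \<Rightarrow> nat \<Rightarrow> lab \<Rightarrow> nat list" where
  "v2 ns K l = vec ns (\<lambda>i. w2 ns K i l)"

lemma filter_rep: "filter (\<lambda>y. y = i) (replicate n a) = (if a = i then replicate n a else [])"
  by (induction n) auto

lemma filter_concat_rep:
  "distinct L \<Longrightarrow> length (filter (\<lambda>y. y = i) (concat (map (\<lambda>j. replicate (f j) j) L))) = (if i \<in> set L then f i else 0)"
  by (induction L) (auto simp: filter_rep)

lemma length_concat_rep:
  "length (concat (map (\<lambda>j. replicate (f j) j) [0..<r])) = (\<Sum>j<r. f j)"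
  by (induction r) auto

lemma set_concat_rep: "set (concat (map (\<lambda>j. replicate (f j) j) [0..<r])) \<subseteq> {..<r}"
  by auto

lemma cs_length: "length (cs ns) = (\<Sum>i<length ns. ns ! i div 2)"
  unfolding cs_def by (rule length_concat_rep)

lemma cs_lt: "t < length (cs ns) \<Longrightarrow> cs ns ! t < length ns"
  using set_concat_rep[of "\<lambda>i. ns ! i div 2" "length ns"] nth_mem[of t "cs ns"] unfolding cs_def by auto

lemma cs_count: "i < length ns \<Longrightarrow> card {t. t < length (cs ns) \<and> cs ns ! t = i} = ns ! i div 2"
proof -
  assume i: "i < length ns"
  have "card {t. t < length (cs ns) \<and> cs ns ! t = i} = length (filter (\<lambda>y. y = i) (cs ns))"
    by (simp add: length_filter_conv_card)
  also have "\<dots> = ns ! i div 2" unfolding cs_def using filter_concat_rep[of "[0..<length ns]" i] i by simp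
  finally show ?thesis .
qed

lemma kk_le: assumes "K \<le> length (cs ns)" "i < length ns" shows "kk ns K i \<le> ns ! i div 2"
proof -
  have "{t. t < K \<and> cs ns ! t = i} \<subseteq> {t. t < length (cs ns) \<and> cs ns ! t = i}" using assms(1) by auto
  then have "kk ns K i \<le> card {t. t < length (cs ns) \<and> cs ns ! t = i}"
    unfolding kk_def by (intro card_mono) auto
  then show ?thesis using cs_count[OF assms(2)] by simp
qed

lemma kk_pos: assumes "t < K" shows "0 < kk ns K (cs ns ! t)"
proof -
  have "t \<in> {t'. t' < K \<and> cs ns ! t' = cs ns ! t}" using assms by simp
  moreover have "finite {t'. t' < K \<and> cs ns ! t' = cs ns ! t}" by simp
  ultimately show ?thesis unfolding kk_def using card_gt_0_iff by blast
qed

lemma hmod: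
  assumes "0 < n" "k < n"
  shows "int n dvd (X + int ((n - k) mod n)) \<longleftrightarrow> int n dvd (X - int k)"
proof (cases "k = 0")
  case True then show ?thesis by simp
next
  case False
  then have "(n - k) mod n = n - k" using assms by simp
  then have e: "X + int ((n - k) mod n) = (X - int k) + int n" using assms by simp
  show ?thesis unfolding e by (rule dvd_add_left_iff[OF dvd_refl])
qed

lemma zsl2:
  assumes gt: "\<forall>i<length ns. 1 < ns ! i" and kl: "\<forall>i<length ns. kk ns K i < ns ! i" and fin: "finite Q"
  shows "zsl ns (v2 ns K) Q \<longleftrightarrow> (\<forall>i<length ns. int (ns ! i) dvd
    (int (card {t. Pos t \<in> Q \<and> cs ns ! t = i}) - int (card {t. Neg t \<in> Q \<and> cs ns ! t = i})
      + (if NHh \<in> Q then int (kk ns K i) else 0) - (if Hh \<in> Q then int (kk ns K i) else 0)))"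
proof -
  have G: "v2 ns K l \<in> Gcar ns" for l
    unfolding v2_def
  proof (rule vec_Gcar)
    fix i assume i: "i < length ns"
    then show "w2 ns K i l < ns ! i" using gt kl by (cases l) (auto simp: w2_def)
  qed
  have fP: "finite {t. Pos t \<in> Q}" using finite_vimageI[of Q Pos] fin by (simp add: inj_def vimage_def)
  have fN: "finite {t. Neg t \<in> Q}" using finite_vimageI[of Q Neg] fin by (simp add: inj_def vimage_def)
  have S: "(\<Sum>l\<in>Q. v2 ns K l ! i) = card {t. Pos t \<in> Q \<and> cs ns ! t = i}
      + card {t. Neg t \<in> Q \<and> cs ns ! t = i} * (ns ! i - 1)
      + ((if Hh \<in> Q then (ns ! i - kk ns K i) mod ns ! i else 0) + (if NHh \<in> Q then kk ns K i else 0))"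
    if i: "i < length ns" for i
  proof -
    have "(\<Sum>l\<in>Q. v2 ns K l ! i) = (\<Sum>l\<in>Q. w2 ns K i l)"
      unfolding v2_def using i by simp
    also have "\<dots> = (\<Sum>t\<in>{t. Pos t \<in> Q}. if cs ns ! t = i then 1 else 0)
       + (\<Sum>t\<in>{t. Neg t \<in> Q}. if cs ns ! t = i then ns ! i - 1 else 0)
       + (if Hh \<in> Q then (ns ! i - kk ns K i) mod ns ! i else 0) + (if NHh \<in> Q then kk ns K i else 0)"
      using sum_split_lab[OF fin, of "w2 ns K i"] by (simp add: w2_def)
    also have "(\<Sum>t\<in>{t. Pos t \<in> Q}. if cs ns ! t = i then 1 else 0) = card {t. Pos t \<in> Q \<and> cs ns ! t = i}"
      using sum.inter_filter[OF fP, of "\<lambda>_. (1::nat)" "\<lambda>t. cs ns ! t = i"] by simp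
    also have "(\<Sum>t\<in>{t. Neg t \<in> Q}. if cs ns ! t = i then ns ! i - 1 else 0) = card {t. Neg t \<in> Q \<and> cs ns ! t = i} * (ns ! i - 1)"
      using sum.inter_filter[OF fN, of "\<lambda>_. ns ! i - 1" "\<lambda>t. cs ns ! t = i"] by simp
    finally show ?thesis by simp
  qed
  have eq: "(\<Sum>l\<in>Q. v2 ns K l ! i) mod ns ! i = 0 \<longleftrightarrow> int (ns ! i) dvd
    (int (card {t. Pos t \<in> Q \<and> cs ns ! t = i}) - int (card {t. Neg t \<in> Q \<and> cs ns ! t = i})
      + (if NHh \<in> Q then int (kk ns K i) else 0) - (if Hh \<in> Q then int (kk ns K i) else 0))"
    if i: "i < length ns" for i
  proof -
    have n0: "0 < ns ! i" using gt i by auto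
    have k: "kk ns K i < ns ! i" using kl i by auto
    define X where "X = int (card {t. Pos t \<in> Q \<and> cs ns ! t = i}) - int (card {t. Neg t \<in> Q \<and> cs ns ! t = i})
      + (if NHh \<in> Q then int (kk ns K i) else 0)"
    have "(\<Sum>l\<in>Q. v2 ns K l ! i) mod ns ! i = 0 \<longleftrightarrow> int (ns ! i) dvd (X
       + (if Hh \<in> Q then int ((ns ! i - kk ns K i) mod ns ! i) else 0))"
      unfolding S[OF i] arith_cnt[OF n0] X_def by (simp add: algebra_simps)
    also have "\<dots> \<longleftrightarrow> int (ns ! i) dvd (X - (if Hh \<in> Q then int (kk ns K i) else 0))"
      using hmod[OF n0 k, of X] by simp
    finally show ?thesis unfolding X_def .
  qed
  show ?thesis unfolding zsl_def using G eq by simp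
qed



lemma arith2:
  assumes n0: "0 < n" and kb: "2 * k \<le> n" and ab: "a \<le> k" "b \<le> k"
    and d: "int n dvd (int a - int b - int k) \<or> int n dvd (int a - int b + int k)"
  shows "(a = k \<and> b = 0) \<or> (a = 0 \<and> b = k)"
  using d
proof
  assume d: "int n dvd (int a - int b - int k)"
  show ?thesis
  proof (cases "int a - int b - int k = 0")
    case True then show ?thesis using ab by linarith
  next
    case False
    have "\<bar>int n\<bar> \<le> \<bar>int a - int b - int k\<bar>" using dvd_imp_le_int[OF False d] .
    then show ?thesis using ab kb by (auto simp: abs_if split: if_split_asm)
  qed
next
  assume d: "int n dvd (int a - int b + int k)"
  show ?thesis
  proof (cases "int a - int b + int k = 0")
    case True then show ?thesis using ab by linarith
  next
    case False
    have "\<bar>int n\<bar> \<le> \<bar>int a - int b + int k\<bar>" using dvd_imp_le_int[OF False d] .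
    then show ?thesis using ab kb by (auto simp: abs_if split: if_split_asm)
  qed
qed

lemma card_ne0_ex: "card X \<noteq> 0 \<Longrightarrow> \<exists>x. x \<in> X"
  by (cases "X = {}") auto


lemma part2:
  assumes gt: "\<forall>i<length ns. 1 < ns ! i" and K2: "2 \<le> K" and KS: "K \<le> (\<Sum>i<length ns. ns ! i div 2)"
  shows "K - 1 \<in> DeltaG ns"
proof -
  define r where "r = length ns"
  define co where "co t = cs ns ! t" for t
  define k where "k i = kk ns K i" for i
  define v where "v = v2 ns K"
  define S where "S = Pos ` {..<K} \<union> Neg ` {..<K} \<union> {Hh, NHh}"
  have KL: "K \<le> length (cs ns)" using KS cs_length by simp
  have cor: "co t < r" if "t < K" for t unfolding co_def r_def using cs_lt that KL by simp
  have n0: "0 < ns ! i" if "i < r" for i using gt that unfolding r_def by auto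
  have kb: "2 * k i \<le> ns ! i" if "i < r" for i
    using kk_le[OF KL, of i] that unfolding k_def r_def by linarith
  have kl: "k i < ns ! i" if "i < r" for i using kb[OF that] n0[OF that] by linarith
  have kp: "0 < k (co t)" if "t < K" for t unfolding k_def co_def using kk_pos[OF that] .
  have kdef: "k i = card {t. t < K \<and> co t = i}" for i unfolding k_def kk_def co_def ..
  have finS: "finite S" unfolding S_def by simp
  define A where "A i Q = card {t. Pos t \<in> Q \<and> co t = i}" for i Q
  define B where "B i Q = card {t. Neg t \<in> Q \<and> co t = i}" for i Q
  have kl': "\<forall>i<length ns. kk ns K i < ns ! i" using kl unfolding k_def r_def by blast
  have zs: "zsl ns v Q \<longleftrightarrow> (\<forall>i<r. int (ns ! i) dvd (int (A i Q) - int (B i Q)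
      + (if NHh \<in> Q then int (k i) else 0) - (if Hh \<in> Q then int (k i) else 0)))" if "finite Q" for Q
    unfolding v_def A_def B_def k_def co_def r_def using zsl2[OF gt kl' that] .
  have Asub: "{t. Pos t \<in> Q \<and> co t = i} \<subseteq> {t. t < K \<and> co t = i}" if "Q \<subseteq> S" for Q i
    using that unfolding S_def by auto
  have Bsub: "{t. Neg t \<in> Q \<and> co t = i} \<subseteq> {t. t < K \<and> co t = i}" if "Q \<subseteq> S" for Q i
    using that unfolding S_def by auto
  have fK: "finite {t. t < K \<and> co t = i}" for i by simp
  have Ale: "A i Q \<le> k i" if "Q \<subseteq> S" for Q i
    unfolding A_def kdef using card_mono[OF fK Asub[OF that]] .
  have Ble: "B i Q \<le> k i" if "Q \<subseteq> S" for Q i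
    unfolding B_def kdef using card_mono[OF fK Bsub[OF that]] .
  have dvQ: "int (ns ! i) dvd (int (A i Q) - int (B i Q)
      + (if NHh \<in> Q then int (k i) else 0) - (if Hh \<in> Q then int (k i) else 0))"
    if "Q \<subseteq> S" "zsl ns v Q" "i < r" for Q i
  proof -
    have "finite Q" using finite_subset[OF that(1) finS] .
    then show ?thesis using zs that(2,3) by blast
  qed
  have E: "A i Q = B i Q" if Q: "Q \<subseteq> S" "zsl ns v Q" "Hh \<in> Q \<longleftrightarrow> NHh \<in> Q" and i: "i < r" for Q i
  proof -
    have d: "int (ns ! i) dvd (int (A i Q) - int (B i Q))"
      using dvQ[OF Q(1,2) i] Q(3) by (cases "Hh \<in> Q") simp_all
    have "int (A i Q) - int (B i Q) = 0"
      by (rule dvd_small_int[OF d]) (use Ale[OF Q(1), of i] Ble[OF Q(1), of i] kl[OF i] in auto)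
    then show ?thesis by simp
  qed
  have X: "Pos t \<in> Q \<longleftrightarrow> Neg t \<notin> Q" if Q: "Q \<subseteq> S" "zsl ns v Q" "(Hh \<in> Q) \<noteq> (NHh \<in> Q)" and t: "t < K" for Q t
  proof -
    define i where "i = co t"
    have i: "i < r" using cor[OF t] unfolding i_def .
    have d: "int (ns ! i) dvd (int (A i Q) - int (B i Q) - int (k i)) \<or> int (ns ! i) dvd (int (A i Q) - int (B i Q) + int (k i))"
      using dvQ[OF Q(1,2) i] Q(3) by (cases "Hh \<in> Q") simp_all
    have c: "(A i Q = k i \<and> B i Q = 0) \<or> (A i Q = 0 \<and> B i Q = k i)"
      by (rule arith2[OF n0[OF i] kb[OF i] Ale[OF Q(1)] Ble[OF Q(1)] d])
    have tin: "t \<in> {t. t < K \<and> co t = i}" using t unfolding i_def by simp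
    from c show ?thesis
    proof
      assume h: "A i Q = k i \<and> B i Q = 0"
      have e1: "{t. Pos t \<in> Q \<and> co t = i} = {t. t < K \<and> co t = i}"
        using card_subset_eq[OF fK Asub[OF Q(1)]] h unfolding A_def kdef by simp
      have e2: "{t. Neg t \<in> Q \<and> co t = i} = {}"
        using h finite_subset[OF Bsub[OF Q(1)] fK] unfolding B_def by simp
      have "t \<in> {t. Pos t \<in> Q \<and> co t = i}" using tin e1 by simp
      moreover have "t \<notin> {t. Neg t \<in> Q \<and> co t = i}" using e2 by simp
      ultimately show ?thesis unfolding i_def by simp
    next
      assume h: "A i Q = 0 \<and> B i Q = k i"
      have e1: "{t. Neg t \<in> Q \<and> co t = i} = {t. t < K \<and> co t = i}"
        using card_subset_eq[OF fK Bsub[OF Q(1)]] h unfolding B_def kdef by simp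
      have e2: "{t. Pos t \<in> Q \<and> co t = i} = {}"
        using h finite_subset[OF Asub[OF Q(1)] fK] unfolding A_def by simp
      have "t \<in> {t. Neg t \<in> Q \<and> co t = i}" using tin e1 by simp
      moreover have "t \<notin> {t. Pos t \<in> Q \<and> co t = i}" using e2 by simp
      ultimately show ?thesis unfolding i_def by simp
    qed
  qed
  have pair_zs: "zsl ns v {Pos t, Neg t'}" if "co t = co t'" for t t'
  proof -
    have "\<forall>i<r. int (ns ! i) dvd (int (A i {Pos t, Neg t'}) - int (B i {Pos t, Neg t'})
      + (if NHh \<in> {Pos t, Neg t'} then int (k i) else 0) - (if Hh \<in> {Pos t, Neg t'} then int (k i) else 0))"
    proof (intro allI impI)
      fix i assume "i < r"
      have "{x. Pos x \<in> {Pos t, Neg t'} \<and> co x = i} = (if co t = i then {t} else {})" by auto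
      moreover have "{x. Neg x \<in> {Pos t, Neg t'} \<and> co x = i} = (if co t' = i then {t'} else {})" by auto
      ultimately have "A i {Pos t, Neg t'} = B i {Pos t, Neg t'}" unfolding A_def B_def using that by simp
      then show "int (ns ! i) dvd (int (A i {Pos t, Neg t'}) - int (B i {Pos t, Neg t'})
        + (if NHh \<in> {Pos t, Neg t'} then int (k i) else 0) - (if Hh \<in> {Pos t, Neg t'} then int (k i) else 0))"
        by simp
    qed
    then show ?thesis using zs[of "{Pos t, Neg t'}"] by simp
  qed
  have pair_ab: "ablock ns v {Pos t, Neg t'}" if tt: "co t = co t'" "t < K" for t t'
  proof (rule pair_ablock)
    have i: "co t < r" using cor[OF tt(2)] .
    have n1: "1 < ns ! co t" using gt i unfolding r_def by auto
    show "\<not> zsl ns v {Pos t}"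
    proof
      assume "zsl ns v {Pos t}"
      then have "int (ns ! co t) dvd (int (A (co t) {Pos t}) - int (B (co t) {Pos t})
        + (if NHh \<in> {Pos t} then int (k (co t)) else 0) - (if Hh \<in> {Pos t} then int (k (co t)) else 0))"
        using zs[of "{Pos t}"] i by simp
      moreover have "{x. Pos x \<in> {Pos t} \<and> co x = co t} = {t}" "{x. Neg x \<in> {Pos t} \<and> co x = co t} = {}" by auto
      ultimately have "int (ns ! co t) dvd 1" unfolding A_def B_def by simp
      then show False using n1 by simp
    qed
    show "\<not> zsl ns v {Neg t'}"
    proof
      assume "zsl ns v {Neg t'}"
      then have "int (ns ! co t) dvd (int (A (co t) {Neg t'}) - int (B (co t) {Neg t'})
        + (if NHh \<in> {Neg t'} then int (k (co t)) else 0) - (if Hh \<in> {Neg t'} then int (k (co t)) else 0))"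
        using zs[of "{Neg t'}"] i by simp
      moreover have "{x. Pos x \<in> {Neg t'} \<and> co x = co t} = {}" "{x. Neg x \<in> {Neg t'} \<and> co x = co t} = {t'}"
        using tt(1) by auto
      ultimately have "int (ns ! co t) dvd - 1" unfolding A_def B_def by simp
      then show False using n1 by simp
    qed
  qed (use pair_zs tt in auto)
  have i0: "co 0 < r" using cor K2 by simp
  have k0: "0 < k (co 0)" "k (co 0) < ns ! co 0" using kp[of 0] K2 kl[OF i0] by auto
  have hn_zs: "zsl ns v {Hh, NHh}"
  proof -
    have "{x. Pos x \<in> {Hh, NHh} \<and> co x = i} = {}" "{x. Neg x \<in> {Hh, NHh} \<and> co x = i} = {}" for i by auto
    then show ?thesis using zs[of "{Hh, NHh}"] unfolding A_def B_def by simp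
  qed
  have hn_ab: "ablock ns v {Hh, NHh}"
  proof (rule pair_ablock)
    have e: "{x. Pos x \<in> {l} \<and> co x = i} = {}" "{x. Neg x \<in> {l} \<and> co x = i} = {}" if "l = Hh \<or> l = NHh" for l i
      using that by auto
    show "\<not> zsl ns v {Hh}"
    proof
      assume "zsl ns v {Hh}"
      then have "int (ns ! co 0) dvd (int (A (co 0) {Hh}) - int (B (co 0) {Hh})
        + (if NHh \<in> {Hh} then int (k (co 0)) else 0) - (if Hh \<in> {Hh} then int (k (co 0)) else 0))"
        using zs[of "{Hh}"] i0 by simp
      then have "int (ns ! co 0) dvd - int (k (co 0))" unfolding A_def B_def using e[of Hh] by simp
      then have "- int (k (co 0)) = 0" by (rule dvd_small_int) (use k0 in auto)
      then show False using k0 by simp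
    qed
    show "\<not> zsl ns v {NHh}"
    proof
      assume "zsl ns v {NHh}"
      then have "int (ns ! co 0) dvd (int (A (co 0) {NHh}) - int (B (co 0) {NHh})
        + (if NHh \<in> {NHh} then int (k (co 0)) else 0) - (if Hh \<in> {NHh} then int (k (co 0)) else 0))"
        using zs[of "{NHh}"] i0 by simp
      then have "int (ns ! co 0) dvd int (k (co 0))" unfolding A_def B_def using e[of NHh] by simp
      then have "int (k (co 0)) = 0" by (rule dvd_small_int) (use k0 in auto)
      then show False using k0 by simp
    qed
  qed (use hn_zs in auto)
  define QH0 where "QH0 = insert Hh (Pos ` {..<K})"
  define QN0 where "QN0 = insert NHh (Neg ` {..<K})"
  have QH0S: "QH0 \<subseteq> S" and QN0S: "QN0 \<subseteq> S" unfolding QH0_def QN0_def S_def by auto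
  have abH: "ablock ns v QH0"
  proof (rule ablockI)
    show fin: "finite QH0" "QH0 \<noteq> {}" unfolding QH0_def by auto
    have e: "{t. Pos t \<in> QH0 \<and> co t = i} = {t. t < K \<and> co t = i}" for i
      unfolding QH0_def by auto
    have "\<forall>t. Neg t \<notin> QH0" unfolding QH0_def by auto
    then have "B i QH0 = 0" for i unfolding B_def by simp
    moreover have "A i QH0 = k i" for i unfolding A_def kdef using e by simp
    moreover have "Hh \<in> QH0" "NHh \<notin> QH0" unfolding QH0_def by auto
    ultimately show "zsl ns v QH0" using zs[OF fin(1)] by simp
    fix Q' assume Q': "Q' \<subseteq> QH0" "Q' \<noteq> {}" "zsl ns v Q'"
    have Q'S: "Q' \<subseteq> S" using Q'(1) QH0S by blast
    have nN: "Neg t \<notin> Q'" for t using Q'(1) unfolding QH0_def by auto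
    have nNH: "NHh \<notin> Q'" using Q'(1) unfolding QH0_def by auto
    show "Q' = QH0"
    proof (cases "Hh \<in> Q'")
      case True
      have "Pos t \<in> Q'" if "t < K" for t using X[OF Q'S Q'(3) _ that] True nNH nN by simp
      then have "QH0 \<subseteq> Q'" using True unfolding QH0_def by auto
      then show ?thesis using Q'(1) by auto
    next
      case False
      obtain l where l: "l \<in> Q'" using Q'(2) by blast
      then obtain t where t: "l = Pos t" "t < K" using Q'(1) False unfolding QH0_def by auto
      have "B (co t) Q' = 0" unfolding B_def using nN by simp
      moreover have "A (co t) Q' = B (co t) Q'" using E[OF Q'S Q'(3) _ cor[OF t(2)]] False nNH by simp
      moreover have "t \<in> {x. Pos x \<in> Q' \<and> co x = co t}" using l t by simp
      moreover have "finite {x. Pos x \<in> Q' \<and> co x = co t}" using finite_subset[OF Asub[OF Q'S] fK] .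
      ultimately show ?thesis unfolding A_def using card_gt_0_iff by fastforce
    qed
  qed
  have abN: "ablock ns v QN0"
  proof (rule ablockI)
    show fin: "finite QN0" "QN0 \<noteq> {}" unfolding QN0_def by auto
    have e: "{t. Neg t \<in> QN0 \<and> co t = i} = {t. t < K \<and> co t = i}" for i
      unfolding QN0_def by auto
    have "\<forall>t. Pos t \<notin> QN0" unfolding QN0_def by auto
    then have "A i QN0 = 0" for i unfolding A_def by simp
    moreover have "B i QN0 = k i" for i unfolding B_def kdef using e by simp
    moreover have "NHh \<in> QN0" "Hh \<notin> QN0" unfolding QN0_def by auto
    ultimately show "zsl ns v QN0" using zs[OF fin(1)] by simp
    fix Q' assume Q': "Q' \<subseteq> QN0" "Q' \<noteq> {}" "zsl ns v Q'"
    have Q'S: "Q' \<subseteq> S" using Q'(1) QN0S by blast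
    have nP: "Pos t \<notin> Q'" for t using Q'(1) unfolding QN0_def by auto
    have nH: "Hh \<notin> Q'" using Q'(1) unfolding QN0_def by auto
    show "Q' = QN0"
    proof (cases "NHh \<in> Q'")
      case True
      have "Neg t \<in> Q'" if "t < K" for t using X[OF Q'S Q'(3) _ that] True nH nP by simp
      then have "QN0 \<subseteq> Q'" using True unfolding QN0_def by auto
      then show ?thesis using Q'(1) by auto
    next
      case False
      obtain l where l: "l \<in> Q'" using Q'(2) by blast
      then obtain t where t: "l = Neg t" "t < K" using Q'(1) False unfolding QN0_def by auto
      have "A (co t) Q' = 0" unfolding A_def using nP by simp
      moreover have "A (co t) Q' = B (co t) Q'" using E[OF Q'S Q'(3) _ cor[OF t(2)]] False nH by simp
      moreover have "t \<in> {x. Neg x \<in> Q' \<and> co x = co t}" using l t by simp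
      moreover have "finite {x. Neg x \<in> Q' \<and> co x = co t}" using finite_subset[OF Bsub[OF Q'S] fK] .
      ultimately show ?thesis unfolding B_def using card_gt_0_iff by fastforce
    qed
  qed
  have neHN: "QH0 \<noteq> QN0" unfolding QH0_def QN0_def by auto
  have PA: "pairwise disjnt {QH0, QN0}" "\<Union>{QH0, QN0} = S" "\<forall>Q\<in>{QH0, QN0}. ablock ns v Q" "card {QH0, QN0} = 2"
    using abH abN neHN unfolding pairwise_def disjnt_def QH0_def QN0_def S_def by auto
  define PB where "PB t = {Pos t, Neg t}" for t
  define PBB where "PBB = insert {Hh, NHh} (PB ` {..<K})"
  have PB_inj: "inj_on PB {..<K}" unfolding inj_on_def PB_def by auto
  have HN_notin: "{Hh, NHh} \<notin> PB ` {..<K}" unfolding PB_def by auto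
  have PBcard: "card PBB = (K - 1) + 2"
    unfolding PBB_def using HN_notin card_image[OF PB_inj] K2 by simp
  have PBdisj: "pairwise disjnt PBB"
    unfolding PBB_def pairwise_def disjnt_def PB_def by auto
  have PBun: "\<Union>PBB = S" unfolding PBB_def PB_def S_def by auto
  have PBab: "\<forall>Q\<in>PBB. ablock ns v Q" unfolding PBB_def PB_def using hn_ab pair_ab by auto
  have lab: "\<exists>t<K. l = Pos t \<or> l = Neg t" if "l \<in> S" "l \<noteq> Hh" "l \<noteq> NHh" for l
    using that unfolding S_def by auto
  have HS: "Hh \<in> S" "NHh \<in> S" unfolding S_def by auto
  have cardS: "card S = 2 * K + 2"
  proof -
    have "{t. Pos t \<in> S} = {..<K}" "{t. Neg t \<in> S} = {..<K}" unfolding S_def by auto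
    then show ?thesis using card_split[OF finS] HS by simp
  qed
  have up: "card \<P> = 2 \<or> card \<P> = (K - 1) + 2"
    if P: "pairwise disjnt \<P>" "\<Union>\<P> = S" "\<forall>Q\<in>\<P>. ablock ns v Q" for \<P>
  proof -
    have sub: "Q \<subseteq> S" if "Q \<in> \<P>" for Q using P(2) that by blast
    have ab: "ablock ns v Q" if "Q \<in> \<P>" for Q using P(3) that by blast
    have finQ: "finite Q" if "Q \<in> \<P>" for Q using ablockD(1)[OF ab[OF that]] .
    have zQ: "zsl ns v Q" if "Q \<in> \<P>" for Q using ablockD(3)[OF ab[OF that]] .
    have finP: "finite \<P>" using P(2) finS by (metis finite_UnionD)
    have disj: "Q1 \<inter> Q2 = {}" if "Q1 \<in> \<P>" "Q2 \<in> \<P>" "Q1 \<noteq> Q2" for Q1 Q2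
      using P(1) that unfolding pairwise_def disjnt_def by blast
    obtain QH where QH: "QH \<in> \<P>" "Hh \<in> QH" using P(2) HS by blast
    show ?thesis
    proof (cases "NHh \<in> QH")
      case True
      have QHe: "{Hh, NHh} = QH"
        using ablockD(4)[OF ab[OF QH(1)] _ _ hn_zs] QH(2) True by simp
      have two: "card Q = 2" if Q: "Q \<in> \<P>" "Q \<noteq> QH" for Q
      proof -
        have dQ: "Q \<inter> QH = {}" using disj[OF Q(1) QH(1) Q(2)] .
        have nH: "Hh \<notin> Q" "NHh \<notin> Q" using dQ QH(2) True by blast+
        have EQ: "A i Q = B i Q" if "i < r" for i using E[OF sub[OF Q(1)] zQ[OF Q(1)] _ that] nH by simp
        obtain l where l: "l \<in> Q" using ablockD(2)[OF ab[OF Q(1)]] by blast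
        have "l \<noteq> Hh" "l \<noteq> NHh" using l nH by auto
        then obtain t where t: "t < K" "l = Pos t \<or> l = Neg t" using lab[OF _ ] sub[OF Q(1)] l by blast
        have fA: "finite {x. Pos x \<in> Q \<and> co x = co t}" using finite_subset[OF Asub[OF sub[OF Q(1)]] fK] .
        have fB: "finite {x. Neg x \<in> Q \<and> co x = co t}" using finite_subset[OF Bsub[OF sub[OF Q(1)]] fK] .
        have eq: "A (co t) Q = B (co t) Q" using EQ[OF cor[OF t(1)]] .
        have "\<exists>p q. Pos p \<in> Q \<and> Neg q \<in> Q \<and> co p = co q \<and> p < K"
        proof (cases "l = Pos t")
          case True
          then have "t \<in> {x. Pos x \<in> Q \<and> co x = co t}" using l by simp
          then have "A (co t) Q \<noteq> 0" unfolding A_def using fA card_gt_0_iff by fastforce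
          then have "B (co t) Q \<noteq> 0" using eq by simp
          then obtain q where "q \<in> {x. Neg x \<in> Q \<and> co x = co t}" unfolding B_def using card_ne0_ex by blast
          then have "Neg q \<in> Q" "co t = co q" by auto
          moreover have "Pos t \<in> Q" using True l by simp
          ultimately show ?thesis using t(1) by blast
        next
          case False
          then have lN: "l = Neg t" using t(2) by simp
          then have "t \<in> {x. Neg x \<in> Q \<and> co x = co t}" using l by simp
          then have "B (co t) Q \<noteq> 0" unfolding B_def using fB card_gt_0_iff by fastforce
          then have "A (co t) Q \<noteq> 0" using eq by simp
          then obtain p where p: "p \<in> {x. Pos x \<in> Q \<and> co x = co t}" unfolding A_def using card_ne0_ex by blast
          then have "p \<in> {x. x < K \<and> co x = co t}" using Asub[OF sub[OF Q(1)]] by blast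
          then show ?thesis using p lN l by auto
        qed
        then obtain p q where pq: "Pos p \<in> Q" "Neg q \<in> Q" "co p = co q" "p < K" by blast
        have "{Pos p, Neg q} = Q"
          using ablockD(4)[OF ab[OF Q(1)] _ _ pair_zs[OF pq(3)]] pq(1,2) by simp
        then show ?thesis by auto
      qed
      have "card S = sum card \<P>"
        using card_Union_disjoint[OF P(1)] finQ P(2) by metis
      moreover have "sum card \<P> = card QH + sum card (\<P> - {QH})"
        using sum.remove[OF finP QH(1)] .
      moreover have "sum card (\<P> - {QH}) = 2 * card (\<P> - {QH})"
        using two by simp
      moreover have "card QH = 2" using QHe[symmetric] by simp
      ultimately have "card (\<P> - {QH}) = K" using cardS by linarith
      then have "card \<P> = K + 1" using finP QH(1) by (metis card_Suc_Diff1 Suc_eq_plus1)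
      then show ?thesis using K2 by simp
    next
      case False
      obtain QN where QN: "QN \<in> \<P>" "NHh \<in> QN" using P(2) HS by blast
      have QNH: "QN \<noteq> QH" using QN(2) False by auto
      have dNH: "QN \<inter> QH = {}" using disj[OF QN(1) QH(1) QNH] .
      have hN: "Hh \<notin> QN" using dNH QH(2) by blast
      have XH: "Pos t \<in> QH \<longleftrightarrow> Neg t \<notin> QH" if "t < K" for t
        using X[OF sub[OF QH(1)] zQ[OF QH(1)] _ that] QH(2) False by simp
      have XN: "Pos t \<in> QN \<longleftrightarrow> Neg t \<notin> QN" if "t < K" for t
        using X[OF sub[OF QN(1)] zQ[OF QN(1)] _ that] QN(2) hN by simp
      have cov: "Pos t \<in> QH \<union> QN \<and> Neg t \<in> QH \<union> QN" if "t < K" for t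
        using XH[OF that] XN[OF that] dNH by blast
      have "\<P> = {QH, QN}"
      proof
        show "\<P> \<subseteq> {QH, QN}"
        proof
          fix Q assume Q: "Q \<in> \<P>"
          show "Q \<in> {QH, QN}"
          proof (rule ccontr)
            assume "Q \<notin> {QH, QN}"
            then have d1: "Q \<inter> QH = {}" and d2: "Q \<inter> QN = {}" using disj[OF Q QH(1)] disj[OF Q QN(1)] by auto
            obtain l where l: "l \<in> Q" using ablockD(2)[OF ab[OF Q]] by blast
            have "l \<noteq> Hh" "l \<noteq> NHh" using l d1 d2 QH(2) QN(2) by auto
            then obtain t where t: "t < K" "l = Pos t \<or> l = Neg t" using lab sub[OF Q] l by blast
            then have "l \<in> QH \<union> QN" using cov[OF t(1)] by auto
            then show False using l d1 d2 by blast
          qed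
        qed
        show "{QH, QN} \<subseteq> \<P>" using QH QN by simp
      qed
      then show ?thesis using QNH by simp
    qed
  qed
  have d0: "0 < K - 1" using K2 by simp
  show ?thesis
    using delta_from_partitions[of S "K - 1" ns v, OF finS d0 up PA PBdisj PBun PBab PBcard] .
qed


theorem lemma5p4:
  fixes ns :: "nat list"
  assumes "\<forall>i<length ns. 1 < ns ! i"
    and "\<forall>i. Suc i < length ns \<longrightarrow> ns ! i dvd ns ! Suc i"
    and "prod_list ns \<ge> 3"
  shows "{1 .. last ns - 2} \<union> {1 .. (\<Sum>i<length ns. ns ! i div 2) - 1} \<subseteq> DeltaG ns"
proof
  have ne: "ns \<noteq> []" using assms(3) by auto
  fix d assume "d \<in> {1 .. last ns - 2} \<union> {1 .. (\<Sum>i<length ns. ns ! i div 2) - 1}"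
  then show "d \<in> DeltaG ns"
  proof
    assume d: "d \<in> {1 .. last ns - 2}"
    have m2: "2 \<le> d + 1" and mn: "d + 1 < last ns" using d by auto
    have "d + 1 - 1 \<in> DeltaG ns" using part1[OF ne assms(1) m2 mn] .
    then show ?thesis by simp
  next
    assume d: "d \<in> {1 .. (\<Sum>i<length ns. ns ! i div 2) - 1}"
    have K2: "2 \<le> d + 1" and KS: "d + 1 \<le> (\<Sum>i<length ns. ns ! i div 2)" using d by auto
    have "d + 1 - 1 \<in> DeltaG ns" using part2[OF assms(1) K2 KS] .
    then show ?thesis by simp
  qed
qed

end
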